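(* Let $S$ be a set of places of $\mathbb{Q}$ and let $X$ be the set of places of $\overline{\mathbb{Q}}$ dividing a place in $S$. If $f\in LC_c(X)$, then there exists a number field $K$ such that $f$ is constant on $Y(K,v)$ for every $v\in M_K(S)$. Moreover, that constant value is $0$ for all but finitely many $v\in M_K(S)$.
   Context: Fix an algebraic closure $\overline{\mathbb{Q}}$ of $\mathbb{Q}$; number fields are finite extensions of $\mathbb{Q}$ inside $\overline{\mathbb{Q}}$. Let $Y$ be the set of all places of $\overline{\mathbb{Q}}$. For a number field $K$ and a place $v$ of $K$, put $Y(K,v)=\{y\in Y: y\mid v\}$. $Y$ carries the topology having $\{Y(K,v): [K:\mathbb{Q}]<\infty,\ v \text{ a place of } K\}$ as a basis (it is locally compact, totally disconnected and Hausdorff), and $X\subseteq Y$ carries the subspace topology. For a number field $K$, $M_K(S)$ denotes the set of places of $K$ dividing a place in $S$. $LC_c(X)$ denotes the set of locally constant functions $X\to\mathbb{R}$ with compact support. *)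

theory Defs
  imports "HOL-Analysis.Analysis" "HOL-Computational_Algebra.Polynomial"
begin

definition Qbar :: "complex set" where
  "Qbar = {z. algebraic z}"

definition number_field :: "complex set \<Rightarrow> bool" where
  "number_field K \<longleftrightarrow> K \<subseteq> Qbar \<and> \<rat> \<subseteq> K \<and>
     (\<forall>x\<in>K. \<forall>y\<in>K. x + y \<in> K \<and> x - y \<in> K \<and> x * y \<in> K) \<and>
     (\<forall>x\<in>K. x \<noteq> 0 \<longrightarrow> inverse x \<in> K) \<and>
     (\<exists>B. finite B \<and> B \<subseteq> K \<and>
        K \<subseteq> {\<Sum>b\<in>B. c b * b | c. \<forall>b\<in>B. c b \<in> \<rat>})"

definition absval :: "complex set \<Rightarrow> (complex \<Rightarrow> real) \<Rightarrow> bool" where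
  "absval A \<phi> \<longleftrightarrow> (\<forall>x. x \<notin> A \<longrightarrow> \<phi> x = 0) \<and>
     (\<forall>x\<in>A. \<phi> x \<ge> 0 \<and> (\<phi> x = 0 \<longleftrightarrow> x = 0)) \<and>
     (\<forall>x\<in>A. \<forall>y\<in>A. \<phi> (x * y) = \<phi> x * \<phi> y \<and> \<phi> (x + y) \<le> \<phi> x + \<phi> y)"

definition nontrivial_absval :: "complex set \<Rightarrow> (complex \<Rightarrow> real) \<Rightarrow> bool" where
  "nontrivial_absval A \<phi> \<longleftrightarrow> absval A \<phi> \<and> (\<exists>x\<in>A. x \<noteq> 0 \<and> \<phi> x \<noteq> 1)"

definition abs_class :: "complex set \<Rightarrow> (complex \<Rightarrow> real) \<Rightarrow> (complex \<Rightarrow> real) set" where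
  "abs_class A \<phi> = {\<psi>. absval A \<psi> \<and> (\<exists>c>0. \<forall>x\<in>A. \<psi> x = \<phi> x powr c)}"

definition places :: "complex set \<Rightarrow> (complex \<Rightarrow> real) set set" where
  "places A = {abs_class A \<phi> | \<phi>. nontrivial_absval A \<phi>}"

definition restr :: "complex set \<Rightarrow> (complex \<Rightarrow> real) \<Rightarrow> (complex \<Rightarrow> real)" where
  "restr B \<phi> = (\<lambda>x. if x \<in> B then \<phi> x else 0)"

definition place_divides :: "complex set \<Rightarrow> (complex \<Rightarrow> real) set \<Rightarrow> (complex \<Rightarrow> real) set \<Rightarrow> bool" where
  "place_divides B w v \<longleftrightarrow> (\<exists>\<phi>\<in>w. restr B \<phi> \<in> v)"

abbreviation Y :: "(complex \<Rightarrow> real) set set" where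
  "Y \<equiv> places Qbar"

definition YKv :: "complex set \<Rightarrow> (complex \<Rightarrow> real) set \<Rightarrow> (complex \<Rightarrow> real) set set" where
  "YKv K v = {y \<in> Y. place_divides K y v}"

definition Ytop :: "(complex \<Rightarrow> real) set topology" where
  "Ytop = topology_generated_by {YKv K v | K v. number_field K \<and> v \<in> places K}"

definition MK :: "complex set \<Rightarrow> (complex \<Rightarrow> real) set set \<Rightarrow> (complex \<Rightarrow> real) set set" where
  "MK K S = {v \<in> places K. \<exists>s\<in>S. place_divides \<rat> v s}"

definition Xover :: "(complex \<Rightarrow> real) set set \<Rightarrow> (complex \<Rightarrow> real) set set" where
  "Xover S = {y \<in> Y. \<exists>s\<in>S. place_divides \<rat> y s}"

definition LCc :: "(complex \<Rightarrow> real) set set \<Rightarrow> ((complex \<Rightarrow> real) set \<Rightarrow> real) set" where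
  "LCc X = {f. (\<forall>x\<in>X. \<exists>U. openin (subtopology Ytop X) U \<and> x \<in> U \<and> (\<forall>y\<in>U. f y = f x)) \<and>
              compactin (subtopology Ytop X) ((subtopology Ytop X) closure_of {x\<in>X. f x \<noteq> 0})}"

end

theory Submission
  imports Defs
begin

definition qscale :: "rat \<Rightarrow> complex \<Rightarrow> complex" where "qscale q z = of_rat q * z"

interpretation Q: vector_space qscale
  by unfold_locales (auto simp: qscale_def algebra_simps of_rat_add of_rat_mult)

lemma qspan_eq:
  fixes B :: "complex set"
  assumes "finite B"
  shows "{\<Sum>b\<in>B. c b * b | c. \<forall>b\<in>B. c b \<in> \<rat>} = Q.span B"
proof
  show "{\<Sum>b\<in>B. c b * b | c. \<forall>b\<in>B. c b \<in> \<rat>} \<subseteq> Q.span B"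
  proof safe
    fix c :: "complex \<Rightarrow> complex" assume c: "\<forall>b\<in>B. c b \<in> \<rat>"
    define u where "u b = (SOME r. c b = of_rat r)" for b
    have "\<forall>b\<in>B. c b = of_rat (u b)"
      using c unfolding u_def by (metis (mono_tags, lifting) Rats_cases someI_ex)
    hence "(\<Sum>b\<in>B. c b * b) = (\<Sum>b\<in>B. qscale (u b) b)"
      by (auto simp: qscale_def intro!: sum.cong)
    thus "(\<Sum>b\<in>B. c b * b) \<in> Q.span B"
      using Q.span_finite[OF assms] by auto
  qed
next
  show "Q.span B \<subseteq> {\<Sum>b\<in>B. c b * b | c. \<forall>b\<in>B. c b \<in> \<rat>}"
  proof
    fix x assume "x \<in> Q.span B"
    then obtain u where "x = (\<Sum>b\<in>B. qscale (u b) b)"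
      using Q.span_finite[OF assms] by auto
    thus "x \<in> {\<Sum>b\<in>B. c b * b | c. \<forall>b\<in>B. c b \<in> \<rat>}"
      by (auto simp: qscale_def intro!: exI[of _ "\<lambda>b. of_rat (u b)"])
  qed
qed

lemma span_mult:
  assumes AB: "\<And>a b. a \<in> A \<Longrightarrow> b \<in> B \<Longrightarrow> a * b \<in> Q.span C"
    and x: "x \<in> Q.span A" and y: "y \<in> Q.span B"
  shows "x * y \<in> Q.span C"
proof -
  have inner: "a * y \<in> Q.span C" if a: "a \<in> A" for a
    using y
  proof (induction rule: Q.span_induct_alt)
    case base then show ?case by (simp add: Q.span_zero)
  next
    case (step c b y')
    have "a * (qscale c b + y') = qscale c (a * b) + a * y'"
      by (simp add: qscale_def algebra_simps)
    then show ?case using step AB[OF a step(1)] by (simp add: Q.span_add Q.span_scale)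
  qed
  show ?thesis using x
  proof (induction rule: Q.span_induct_alt)
    case base then show ?case by (simp add: Q.span_zero)
  next
    case (step c a x')
    have "(qscale c a + x') * y = qscale c (a * y) + x' * y"
      by (simp add: qscale_def algebra_simps)
    then show ?case using step inner[OF step(1)] by (simp add: Q.span_add Q.span_scale)
  qed
qed

definition ringQ :: "complex set \<Rightarrow> bool" where
  "ringQ L \<longleftrightarrow> \<rat> \<subseteq> L \<and> (\<forall>x\<in>L. \<forall>y\<in>L. x + y \<in> L \<and> x - y \<in> L \<and> x * y \<in> L)"

lemma poly_in:
  assumes "ringQ L" "x \<in> L" "\<forall>i. coeff p i \<in> \<rat>"
  shows "poly p x \<in> L"
  using assms(3)
proof (induction p rule: pCons_induct)
  case 0 then show ?case using assms(1) by (auto simp: ringQ_def)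
next
  case (pCons a q)
  have "\<forall>i. coeff q i \<in> \<rat>" using pCons.prems by (metis coeff_pCons_Suc)
  hence "poly q x \<in> L" using pCons.IH by auto
  moreover have "a \<in> L" using pCons.prems assms(1) by (metis coeff_pCons_0 ringQ_def subsetD)
  ultimately show ?case using assms(1,2) by (auto simp: ringQ_def)
qed

lemma inverse_in:
  assumes L: "ringQ L" and x: "x \<in> L" "x \<noteq> 0"
  shows "(\<forall>i. coeff p i \<in> \<rat>) \<Longrightarrow> p \<noteq> 0 \<Longrightarrow> poly p x = 0 \<Longrightarrow> inverse x \<in> L"
proof (induction p rule: pCons_induct)
  case 0 then show ?case by simp
next
  case (pCons a q)
  have q: "\<forall>i. coeff q i \<in> \<rat>" using pCons.prems by (metis coeff_pCons_Suc)
  have a: "a \<in> \<rat>" using pCons.prems by (metis coeff_pCons_0)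
  have eq: "a + x * poly q x = 0" using pCons.prems by simp
  show ?case
  proof (cases "a = 0")
    case True
    then have "q \<noteq> 0" using pCons.prems by auto
    moreover have "poly q x = 0" using eq True x by simp
    ultimately show ?thesis using pCons.IH q by blast
  next
    case False
    have "inverse x = (- 1 / a) * poly q x"
      using eq False x by (simp add: field_simps inverse_eq_divide)
         (metis add.commute add_eq_0_iff mult.commute)
    moreover have "poly q x \<in> L" using poly_in[OF L x(1) q] .
    moreover have "- 1 / a \<in> L" using a L by (auto simp: ringQ_def)
    ultimately show ?thesis using L by (auto simp: ringQ_def)
  qed
qed

lemma poly_exists:
  assumes C: "finite C" and L: "L = Q.span C" and one: "1 \<in> L"
    and mult: "\<And>a b. a \<in> L \<Longrightarrow> b \<in> L \<Longrightarrow> a * b \<in> L" and x: "x \<in> L"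
  shows "\<exists>p. (\<forall>i. coeff p i \<in> \<rat>) \<and> p \<noteq> 0 \<and> poly p x = 0"
proof -
  define n where "n = card C"
  have pw: "x ^ i \<in> L" for i
    by (induction i) (use one mult x in auto)
  show ?thesis
  proof (cases "inj_on (\<lambda>i. x ^ i) {..n}")
    case False
    then obtain i j where ij: "i \<le> n" "j \<le> n" "i \<noteq> j" "x ^ i = x ^ j"
      unfolding inj_on_def by auto
    define p :: "complex poly" where "p = monom 1 i - monom 1 j"
    have "coeff p i = 1" using ij by (simp add: p_def coeff_monom)
    hence "p \<noteq> 0" by auto
    moreover have "\<forall>k. coeff p k \<in> \<rat>" by (simp add: p_def coeff_monom)
    moreover have "poly p x = 0" using ij by (simp add: p_def poly_monom)
    ultimately show ?thesis by blast
  next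
    case True
    define S where "S = (\<lambda>i. x ^ i) ` {..n}"
    have cardS: "card S = Suc n" using True by (simp add: S_def card_image)
    have "S \<subseteq> Q.span C" using pw L by (auto simp: S_def)
    hence "Q.dependent S"
      using Q.independent_span_bound[OF C, of S] cardS n_def by auto
    then obtain t u where tu: "finite t" "t \<subseteq> S" "(\<Sum>v\<in>t. qscale (u v) v) = 0" "\<exists>v\<in>t. u v \<noteq> 0"
      unfolding Q.dependent_explicit by blast
    define c where "c i = (if x ^ i \<in> t then of_rat (u (x ^ i)) else (0::complex))" for i
    define p where "p = (\<Sum>i\<le>n. monom (c i) i)"
    have coeffp: "coeff p k = (if k \<le> n then c k else 0)" for k
      by (simp add: p_def coeff_sum coeff_monom)
    have "\<forall>k. coeff p k \<in> \<rat>" by (simp add: coeffp c_def)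
    moreover have "p \<noteq> 0"
    proof -
      obtain v where v: "v \<in> t" "u v \<noteq> 0" using tu by blast
      then obtain i where i: "i \<le> n" "v = x ^ i" using tu(2) by (auto simp: S_def)
      have "coeff p i \<noteq> 0" using v i by (simp add: coeffp c_def)
      thus ?thesis by auto
    qed
    moreover have "poly p x = 0"
    proof -
      define I where "I = {i\<in>{..n}. x ^ i \<in> t}"
      have tI: "t = (\<lambda>i. x ^ i) ` I" using tu(2) by (auto simp: I_def S_def)
      have injI: "inj_on (\<lambda>i. x ^ i) I" using True by (rule inj_on_subset) (auto simp: I_def)
      have "poly p x = (\<Sum>i\<le>n. c i * x ^ i)" by (simp add: p_def poly_sum poly_monom)
      also have "\<dots> = (\<Sum>i\<in>I. c i * x ^ i)"
        by (rule sum.mono_neutral_right) (auto simp: I_def c_def)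
      also have "\<dots> = (\<Sum>i\<in>I. qscale (u (x ^ i)) (x ^ i))"
        by (rule sum.cong) (auto simp: I_def c_def qscale_def)
      also have "\<dots> = (\<Sum>v\<in>t. qscale (u v) v)"
        unfolding tI by (rule sum.reindex[OF injI, symmetric, unfolded comp_def])
      also have "\<dots> = 0" by (rule tu(3))
      finally show ?thesis .
    qed
    ultimately show ?thesis by blast
  qed
qed

lemma nf_ops:
  assumes "number_field K" "x \<in> K" "y \<in> K"
  shows "x * y \<in> K" "x + y \<in> K" "x - y \<in> K"
  using assms unfolding number_field_def by auto

lemma nf_basic:
  assumes "number_field K"
  shows "K \<subseteq> Qbar" "\<rat> \<subseteq> K" "1 \<in> K"
  using assms unfolding number_field_def by auto

lemma compositum:
  assumes K1: "number_field K1" and K2: "number_field K2"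
  shows "\<exists>L. number_field L \<and> K1 \<subseteq> L \<and> K2 \<subseteq> L"
proof -
  obtain B1 where B1: "finite B1" "B1 \<subseteq> K1" "K1 \<subseteq> {\<Sum>b\<in>B1. c b * b | c. \<forall>b\<in>B1. c b \<in> \<rat>}"
    using K1 unfolding number_field_def by blast
  hence B1: "finite B1" "B1 \<subseteq> K1" "K1 \<subseteq> Q.span B1" using qspan_eq[of B1] by auto
  obtain B2 where B2: "finite B2" "B2 \<subseteq> K2" "K2 \<subseteq> {\<Sum>b\<in>B2. c b * b | c. \<forall>b\<in>B2. c b \<in> \<rat>}"
    using K2 unfolding number_field_def by blast
  hence B2: "finite B2" "B2 \<subseteq> K2" "K2 \<subseteq> Q.span B2" using qspan_eq[of B2] by auto
  define C where "C = (\<lambda>(a,b). a * b) ` (B1 \<times> B2)"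
  define L where "L = Q.span C"
  have Cfin: "finite C" using B1 B2 by (simp add: C_def)
  have B12: "a * b \<in> Q.span C" if "a \<in> B1" "b \<in> B2" for a b
    using that by (intro Q.span_base) (force simp: C_def)
  have K12: "a * b \<in> L" if "a \<in> K1" "b \<in> K2" for a b
  proof -
    have "a \<in> Q.span B1" "b \<in> Q.span B2" using that B1 B2 by auto
    thus ?thesis unfolding L_def using span_mult[of B1 B2 C, OF B12] by blast
  qed
  have one1: "1 \<in> K1" and one2: "1 \<in> K2" using nf_basic K1 K2 by auto
  have sub1: "K1 \<subseteq> L" using K12[OF _ one2] by auto
  have sub2: "K2 \<subseteq> L" using K12[OF one1] by auto
  have multL: "a * b \<in> L" if "a \<in> L" "b \<in> L" for a b
  proof -
    have "c1 * c2 \<in> Q.span C" if cc: "c1 \<in> C" "c2 \<in> C" for c1 c2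
    proof -
      obtain a1 b1 a2 b2 where e: "c1 = a1 * b1" "c2 = a2 * b2" "a1 \<in> B1" "a2 \<in> B1" "b1 \<in> B2" "b2 \<in> B2"
        using cc by (auto simp: C_def)
      have "a1 * a2 \<in> K1" using e(3,4) B1(2) by (intro nf_ops(1)[OF K1]) auto
      moreover have "b1 * b2 \<in> K2" using e(5,6) B2(2) by (intro nf_ops(1)[OF K2]) auto
      ultimately have "(a1 * a2) * (b1 * b2) \<in> L" by (rule K12)
      moreover have "c1 * c2 = (a1 * a2) * (b1 * b2)" using e by (simp add: algebra_simps)
      ultimately show ?thesis by (simp add: L_def)
    qed
    hence "a * b \<in> Q.span C" using that unfolding L_def by (rule span_mult)
    thus ?thesis by (simp add: L_def)
  qed
  have one: "1 \<in> L" using sub1 one1 by auto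
  have ratL: "\<rat> \<subseteq> L"
  proof
    fix q :: complex assume "q \<in> \<rat>"
    then obtain r where "q = of_rat r" by (rule Rats_cases)
    hence "q = qscale r 1" by (simp add: qscale_def)
    thus "q \<in> L" using one by (simp add: L_def Q.span_scale)
  qed
  have ring: "ringQ L" unfolding ringQ_def
  proof (intro conjI ballI)
    fix x y assume xy: "x \<in> L" "y \<in> L"
    show "x + y \<in> L" using xy unfolding L_def by (rule Q.span_add)
    show "x - y \<in> L" using xy unfolding L_def by (rule Q.span_diff)
    show "x * y \<in> L" using xy by (rule multL)
  qed (rule ratL)
  have px: "\<exists>p. (\<forall>i. coeff p i \<in> \<rat>) \<and> p \<noteq> 0 \<and> poly p x = 0" if "x \<in> L" for x
    by (rule poly_exists[OF Cfin L_def one multL that])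
  have "L \<subseteq> Qbar"
  proof
    fix x assume "x \<in> L"
    from px[OF this] show "x \<in> Qbar" unfolding Qbar_def algebraic_altdef by simp
  qed
  moreover have "\<forall>x\<in>L. x \<noteq> 0 \<longrightarrow> inverse x \<in> L"
  proof (intro ballI impI)
    fix x assume x: "x \<in> L" "x \<noteq> 0"
    from px[OF x(1)] obtain p where "\<forall>i. coeff p i \<in> \<rat>" "p \<noteq> 0" "poly p x = 0" by blast
    thus "inverse x \<in> L" using inverse_in[OF ring x] by blast
  qed
  moreover have "C \<subseteq> L" by (simp add: L_def Q.span_superset)
  moreover have "L \<subseteq> {\<Sum>b\<in>C. c b * b | c. \<forall>b\<in>C. c b \<in> \<rat>}"
    unfolding qspan_eq[OF Cfin] L_def by (rule order_refl)
  moreover have "\<forall>x\<in>L. \<forall>y\<in>L. x + y \<in> L \<and> x - y \<in> L \<and> x * y \<in> L"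
    using ring unfolding ringQ_def by blast
  ultimately have "number_field L"
    unfolding number_field_def using ratL Cfin by blast
  thus ?thesis using sub1 sub2 by blast
qed

lemma number_field_rat: "number_field \<rat>"
  unfolding number_field_def
proof (intro conjI)
  show "\<rat> \<subseteq> Qbar" unfolding Qbar_def using rat_imp_algebraic by blast
  show "\<rat> \<subseteq> (\<rat>::complex set)" by (rule order_refl)
  show "\<forall>x\<in>\<rat>. \<forall>y\<in>\<rat>. x + y \<in> \<rat> \<and> x - y \<in> \<rat> \<and> x * y \<in> (\<rat>::complex set)"
    by (simp add: Rats_add Rats_diff Rats_mult)
  show "\<forall>x\<in>\<rat>. x \<noteq> 0 \<longrightarrow> inverse x \<in> (\<rat>::complex set)"
    by (simp add: Rats_inverse)
  have mem: "q \<in> {\<Sum>b\<in>{1}. c b * b | c. \<forall>b\<in>{1}. c b \<in> \<rat>}" if "q \<in> \<rat>" for q :: complex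
  proof -
    have "\<exists>c. q = (\<Sum>b\<in>{1}. c b * b) \<and> (\<forall>b\<in>{1}. c b \<in> \<rat>)"
      using that by (intro exI[of _ "\<lambda>_. q"]) simp
    thus ?thesis by simp
  qed
  have sub: "(\<rat>::complex set) \<subseteq> {\<Sum>b\<in>{1}. c b * b | c. \<forall>b\<in>{1}. c b \<in> \<rat>}" by (rule subsetI) (erule mem)
  have "finite {1::complex}" "{1::complex} \<subseteq> \<rat>" by simp_all
  show "\<exists>B. finite B \<and> B \<subseteq> (\<rat>::complex set) \<and> \<rat> \<subseteq> {\<Sum>b\<in>B. c b * b | c. \<forall>b\<in>B. c b \<in> \<rat>}"
  proof (rule exI[of _ "{1::complex}"], intro conjI)
    show "finite {1::complex}" by simp
    show "{1::complex} \<subseteq> \<rat>" by simp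
    show "\<rat> \<subseteq> {\<Sum>b\<in>{1}. c b * b | c. \<forall>b\<in>{1::complex}. c b \<in> \<rat>}" by (rule sub)
  qed
qed

lemma common_field:
  assumes "finite F" "\<forall>K\<in>F. number_field K"
  shows "\<exists>L. number_field L \<and> (\<forall>K\<in>F. K \<subseteq> L)"
  using assms
proof (induction F rule: finite_induct)
  case empty then show ?case using number_field_rat by blast
next
  case (insert K F)
  then obtain L where "number_field L" "\<forall>K\<in>F. K \<subseteq> L" by auto
  moreover obtain L' where "number_field L'" "K \<subseteq> L'" "L \<subseteq> L'"
    using compositum[OF _ \<open>number_field L\<close>, of K] insert.prems by blast
  ultimately show ?case by blast
qed


lemma class_mem: "\<psi> \<in> abs_class A \<rho> \<Longrightarrow> absval A \<psi> \<and> (\<exists>c>0. \<forall>x\<in>A. \<psi> x = \<rho> x powr c)"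
  by (simp add: abs_class_def)

lemma class_trans:
  assumes "\<psi> \<in> abs_class A \<rho>" "absval A \<theta>" "c > 0" "\<forall>x\<in>A. \<theta> x = \<psi> x powr c"
  shows "\<theta> \<in> abs_class A \<rho>"
proof -
  obtain d where d: "d > 0" "\<forall>x\<in>A. \<psi> x = \<rho> x powr d" using class_mem[OF assms(1)] by blast
  have "\<forall>x\<in>A. \<theta> x = \<rho> x powr (d * c)" using d assms(4) by (simp add: powr_powr)
  moreover have "d * c > 0" using d assms(3) by simp
  ultimately show ?thesis using assms(2) unfolding abs_class_def by blast
qed

lemma class_rel:
  assumes "\<psi> \<in> abs_class A \<rho>" "\<theta> \<in> abs_class A \<rho>"
  shows "\<exists>c>0. \<forall>x\<in>A. \<theta> x = \<psi> x powr c"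
proof -
  obtain d where d: "d > 0" "\<forall>x\<in>A. \<psi> x = \<rho> x powr d" using class_mem[OF assms(1)] by blast
  obtain e where e: "e > 0" "\<forall>x\<in>A. \<theta> x = \<rho> x powr e" using class_mem[OF assms(2)] by blast
  have "\<forall>x\<in>A. \<theta> x = \<psi> x powr (e / d)" using d e by (simp add: powr_powr)
  moreover have "e / d > 0" using d e by simp
  ultimately show ?thesis by blast
qed

lemma class_eq:
  assumes "\<theta> \<in> abs_class A \<rho>" "\<theta> \<in> abs_class A \<rho>'"
  shows "abs_class A \<rho> = abs_class A \<rho>'"
proof -
  have *: "\<psi> \<in> abs_class A r'" if h: "\<theta> \<in> abs_class A r" "\<theta> \<in> abs_class A r'" "\<psi> \<in> abs_class A r" for r r' \<psi>
  proof -
    obtain c where "c > 0" "\<forall>x\<in>A. \<psi> x = \<theta> x powr c" using class_rel[OF h(1,3)] by blast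
    moreover have "absval A \<psi>" using class_mem[OF h(3)] by blast
    ultimately show ?thesis using class_trans[OF h(2)] by blast
  qed
  show ?thesis using *[OF assms] *[OF assms(2,1)] by blast
qed

lemma self_class: "absval A \<phi> \<Longrightarrow> \<phi> \<in> abs_class A \<phi>"
  unfolding abs_class_def absval_def
  by (auto intro!: exI[of _ 1] simp: powr_one)

lemma absval_restr:
  assumes "absval A \<phi>" "B \<subseteq> A" "\<And>x y. x \<in> B \<Longrightarrow> y \<in> B \<Longrightarrow> x * y \<in> B \<and> x + y \<in> B"
  shows "absval B (restr B \<phi>)"
proof -
  have a: "\<forall>x\<in>A. \<phi> x \<ge> 0 \<and> (\<phi> x = 0 \<longleftrightarrow> x = 0)"
     "\<forall>x\<in>A. \<forall>y\<in>A. \<phi> (x * y) = \<phi> x * \<phi> y \<and> \<phi> (x + y) \<le> \<phi> x + \<phi> y"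
    using assms(1) unfolding absval_def by blast+
  show ?thesis unfolding absval_def restr_def
  proof (intro conjI ballI allI impI)
    fix x y assume xy: "x \<in> B" "y \<in> B"
    then have "x \<in> A" "y \<in> A" "x * y \<in> B" "x + y \<in> B" using assms(2,3) by auto
    then show "(if x * y \<in> B then \<phi> (x * y) else 0) = (if x \<in> B then \<phi> x else 0) * (if y \<in> B then \<phi> y else 0)"
      and "(if x + y \<in> B then \<phi> (x + y) else 0) \<le> (if x \<in> B then \<phi> x else 0) + (if y \<in> B then \<phi> y else 0)"
      using a xy by auto
  next
    fix x assume "x \<in> B"
    then have "x \<in> A" using assms(2) by auto
    then show "0 \<le> (if x \<in> B then \<phi> x else 0)" "((if x \<in> B then \<phi> x else 0) = 0) = (x = 0)"
      using a \<open>x \<in> B\<close> by auto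
  qed auto
qed

lemma nf_closed: "number_field K \<Longrightarrow> x \<in> K \<Longrightarrow> y \<in> K \<Longrightarrow> x * y \<in> K \<and> x + y \<in> K"
  using nf_ops by blast

lemma rat_closed: "x \<in> \<rat> \<Longrightarrow> y \<in> \<rat> \<Longrightarrow> x * y \<in> \<rat> \<and> x + y \<in> (\<rat>::complex set)"
  by (simp add: Rats_mult Rats_add)

lemma place_absval: "y \<in> places A \<Longrightarrow> \<phi> \<in> y \<Longrightarrow> absval A \<phi>"
  unfolding places_def abs_class_def by blast

lemma place_class: "y \<in> places A \<Longrightarrow> \<exists>\<rho>. y = abs_class A \<rho>"
  unfolding places_def by blast

lemma place_trans:
  assumes "v \<in> places A" "\<psi> \<in> v" "absval A \<theta>" "c > 0" "\<forall>x\<in>A. \<theta> x = \<psi> x powr c"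
  shows "\<theta> \<in> v"
proof -
  obtain \<rho> where r: "v = abs_class A \<rho>" using place_class[OF assms(1)] by blast
  show ?thesis using class_trans[of \<psi> A \<rho> \<theta> c] assms r by blast
qed

lemma place_rel:
  assumes "v \<in> places A" "\<psi> \<in> v" "\<theta> \<in> v"
  shows "\<exists>c>0. \<forall>x\<in>A. \<theta> x = \<psi> x powr c"
proof -
  obtain \<rho> where r: "v = abs_class A \<rho>" using place_class[OF assms(1)] by blast
  show ?thesis using class_rel[of \<psi> A \<rho> \<theta>] assms r by blast
qed

lemma restr_restr: "B \<subseteq> K \<Longrightarrow> restr B (restr K \<phi>) = restr B \<phi>"
  unfolding restr_def by (rule ext) auto

lemma YKv_mono:
  assumes K: "number_field K" and L: "number_field L" and KL: "K \<subseteq> L"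
    and w: "w \<in> places L" and v: "v \<in> places K"
    and y1: "y \<in> YKv L w" and y2: "y \<in> YKv K v"
  shows "YKv L w \<subseteq> YKv K v"
proof
  fix z assume z: "z \<in> YKv L w"
  then obtain \<phi>z where z1: "z \<in> Y" "\<phi>z \<in> z" "restr L \<phi>z \<in> w"
    unfolding YKv_def place_divides_def by blast
  obtain \<phi>1 where p1: "\<phi>1 \<in> y" "restr L \<phi>1 \<in> w" and yY: "y \<in> Y"
    using y1 unfolding YKv_def place_divides_def by blast
  obtain \<phi>2 where p2: "\<phi>2 \<in> y" "restr K \<phi>2 \<in> v"
    using y2 unfolding YKv_def place_divides_def by blast
  obtain \<rho>w where "w = abs_class L \<rho>w" using place_class[OF w] by blast
  then obtain c1 where c1: "c1 > 0" "\<forall>x\<in>L. restr L \<phi>z x = restr L \<phi>1 x powr c1"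
    using class_rel[of "restr L \<phi>1" L \<rho>w "restr L \<phi>z"] p1 z1 by blast
  obtain \<sigma> where "y = abs_class Qbar \<sigma>" using place_class[OF yY] by blast
  then obtain c2 where c2: "c2 > 0" "\<forall>x\<in>Qbar. \<phi>1 x = \<phi>2 x powr c2"
    using class_rel[of \<phi>2 Qbar \<sigma> \<phi>1] p1 p2 by blast
  have KQ: "K \<subseteq> Qbar" using nf_basic[OF K] by blast
  have "\<forall>x\<in>K. restr K \<phi>z x = restr K \<phi>2 x powr (c2 * c1)"
  proof
    fix x assume x: "x \<in> K"
    then have "x \<in> L" "x \<in> Qbar" using KL KQ by auto
    then show "restr K \<phi>z x = restr K \<phi>2 x powr (c2 * c1)"
      using c1(2) c2(2) x by (simp add: restr_def powr_powr)
  qed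
  moreover have "absval K (restr K \<phi>z)"
    using absval_restr[OF place_absval[OF z1(1,2)] KQ nf_closed[OF K]] .
  moreover have "c2 * c1 > 0" using c1 c2 by simp
  ultimately have "restr K \<phi>z \<in> v" using place_trans[OF v p2(2)] by blast
  thus "z \<in> YKv K v" using z1 unfolding YKv_def place_divides_def by blast
qed

lemma powr_ne_one: "(a::real) > 0 \<Longrightarrow> a \<noteq> 1 \<Longrightarrow> c > 0 \<Longrightarrow> a powr c \<noteq> 1"
proof
  assume "a > 0" "a \<noteq> 1" "c > 0" "a powr c = 1"
  then have "ln (a powr c) = 0" by simp
  then have "ln a = 0" using \<open>c > 0\<close> by simp
  then show False using \<open>a > 0\<close> \<open>a \<noteq> 1\<close> by simp
qed

lemma exists_place:
  assumes K: "number_field K" and S: "S \<subseteq> places \<rat>" and y: "y \<in> Xover S"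
  shows "\<exists>v\<in>MK K S. y \<in> YKv K v"
proof -
  obtain s \<phi> where s: "s \<in> S" "\<phi> \<in> y" "restr \<rat> \<phi> \<in> s" and yY: "y \<in> Y"
    using y unfolding Xover_def place_divides_def by blast
  obtain \<rho> where \<rho>: "s = abs_class \<rat> \<rho>" "nontrivial_absval \<rat> \<rho>"
    using S s(1) unfolding places_def by blast
  obtain q where q: "q \<in> \<rat>" "q \<noteq> 0" "\<rho> q \<noteq> 1"
    using \<rho>(2) unfolding nontrivial_absval_def by blast
  have "\<rho> q > 0" using \<rho>(2) q unfolding nontrivial_absval_def absval_def
    by (metis less_eq_real_def)
  obtain c where c: "c > 0" "\<forall>x\<in>\<rat>. restr \<rat> \<phi> x = \<rho> x powr c"
    using class_mem[of "restr \<rat> \<phi>"] s(3) \<rho>(1) by blast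
  have "\<phi> q \<noteq> 1" using c q powr_ne_one[OF \<open>\<rho> q > 0\<close> q(3) c(1)]
    by (auto simp: restr_def)
  have RK: "\<rat> \<subseteq> K" and KQ: "K \<subseteq> Qbar" using nf_basic[OF K] by auto
  have absK: "absval K (restr K \<phi>)"
    using absval_restr[OF place_absval[OF yY s(2)] KQ nf_closed[OF K]] .
  have "nontrivial_absval K (restr K \<phi>)"
    unfolding nontrivial_absval_def using absK q RK \<open>\<phi> q \<noteq> 1\<close> by (auto simp: restr_def)
  then have v: "abs_class K (restr K \<phi>) \<in> places K" unfolding places_def by blast
  have mem: "restr K \<phi> \<in> abs_class K (restr K \<phi>)" by (rule self_class[OF absK])
  have "place_divides \<rat> (abs_class K (restr K \<phi>)) s"
    unfolding place_divides_def using mem s(3) restr_restr[OF RK, of \<phi>] by metis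
  then have "abs_class K (restr K \<phi>) \<in> MK K S" using v s(1) unfolding MK_def by blast
  moreover have "y \<in> YKv K (abs_class K (restr K \<phi>))"
    unfolding YKv_def place_divides_def using yY s(2) mem by blast
  ultimately show ?thesis by blast
qed

lemma YKv_sub_X:
  assumes K: "number_field K" and v: "v \<in> MK K S" and S: "S \<subseteq> places \<rat>"
  shows "YKv K v \<subseteq> Xover S"
proof
  fix z assume "z \<in> YKv K v"
  then obtain \<phi> where z: "z \<in> Y" "\<phi> \<in> z" "restr K \<phi> \<in> v"
    unfolding YKv_def place_divides_def by blast
  obtain s \<psi> where s: "s \<in> S" "\<psi> \<in> v" "restr \<rat> \<psi> \<in> s" and vK: "v \<in> places K"
    using v unfolding MK_def place_divides_def by blast
  obtain \<rho> where "v = abs_class K \<rho>" using place_class[OF vK] by blast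
  then obtain c where c: "c > 0" "\<forall>x\<in>K. restr K \<phi> x = \<psi> x powr c"
    using class_rel[of \<psi> K \<rho> "restr K \<phi>"] s z by blast
  have RK: "\<rat> \<subseteq> K" and KQ: "K \<subseteq> Qbar" using nf_basic[OF K] by auto
  have "\<forall>x\<in>\<rat>. restr \<rat> \<phi> x = restr \<rat> \<psi> x powr c"
    using c RK by (auto simp: restr_def)
  moreover have "absval \<rat> (restr \<rat> \<phi>)"
    using absval_restr[OF place_absval[OF z(1,2)] _ rat_closed] RK KQ by blast
  moreover have "s \<in> places \<rat>" using s(1) S by blast
  ultimately have "restr \<rat> \<phi> \<in> s" using place_trans[OF _ s(3)] c(1) by blast
  thus "z \<in> Xover S" unfolding Xover_def place_divides_def using z s(1) by blast
qed

lemma YKv_disj: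
  assumes K: "number_field K" and v: "v \<in> places K" and v': "v' \<in> places K"
    and y: "y \<in> YKv K v" "y \<in> YKv K v'"
  shows "v = v'"
proof -
  obtain \<phi> where p: "\<phi> \<in> y" "restr K \<phi> \<in> v" and yY: "y \<in> Y"
    using y(1) unfolding YKv_def place_divides_def by blast
  obtain \<phi>' where p': "\<phi>' \<in> y" "restr K \<phi>' \<in> v'"
    using y(2) unfolding YKv_def place_divides_def by blast
  obtain \<sigma> where "y = abs_class Qbar \<sigma>" using place_class[OF yY] by blast
  then obtain c where c: "c > 0" "\<forall>x\<in>Qbar. \<phi>' x = \<phi> x powr c"
    using class_rel[of \<phi> Qbar \<sigma> \<phi>'] p p' by blast
  have KQ: "K \<subseteq> Qbar" using nf_basic[OF K] by auto
  have "\<forall>x\<in>K. restr K \<phi>' x = restr K \<phi> x powr c" using c KQ by (auto simp: restr_def)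
  moreover have "absval K (restr K \<phi>')" using place_absval[OF v' p'(2)] .
  ultimately have "restr K \<phi>' \<in> v" using place_trans[OF v p(2)] c(1) by blast
  obtain \<rho> where r: "v = abs_class K \<rho>" using place_class[OF v] by blast
  obtain \<rho>' where r': "v' = abs_class K \<rho>'" using place_class[OF v'] by blast
  show ?thesis using class_eq[of "restr K \<phi>'" K \<rho> \<rho>'] \<open>restr K \<phi>' \<in> v\<close> p'(2) r r' by blast
qed

lemma gen_basis:
  assumes "generate_topology_on B U0" "x \<in> U0"
  shows "\<exists>F. finite F \<and> F \<noteq> {} \<and> F \<subseteq> B \<and> x \<in> \<Inter>F \<and> \<Inter>F \<subseteq> U0"
  using assms
proof (induction arbitrary: x rule: generate_topology_on.induct)
  case Empty then show ?case by simp
next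
  case (Int a b)
  have xa: "x \<in> a" and xb: "x \<in> b" using Int.prems by auto
  obtain F1 where F1: "finite F1" "F1 \<noteq> {}" "F1 \<subseteq> B" "x \<in> \<Inter>F1" "\<Inter>F1 \<subseteq> a"
    using Int.IH(1)[OF xa] by (elim exE conjE)
  obtain F2 where F2: "finite F2" "F2 \<noteq> {}" "F2 \<subseteq> B" "x \<in> \<Inter>F2" "\<Inter>F2 \<subseteq> b"
    using Int.IH(2)[OF xb] by (elim exE conjE)
  have "\<Inter>(F1 \<union> F2) \<subseteq> a \<inter> b" using F1(5) F2(5) by auto
  moreover have "x \<in> \<Inter>(F1 \<union> F2)" using F1(4) F2(4) by auto
  moreover have "finite (F1 \<union> F2)" "F1 \<union> F2 \<noteq> {}" "F1 \<union> F2 \<subseteq> B" using F1 F2 by auto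
  ultimately show ?case by (intro exI[of _ "F1 \<union> F2"]) simp
next
  case (UN K)
  obtain k where k: "k \<in> K" "x \<in> k" using UN.prems by blast
  obtain F where F: "finite F" "F \<noteq> {}" "F \<subseteq> B" "x \<in> \<Inter>F" "\<Inter>F \<subseteq> k"
    using UN.IH[OF k] by (elim exE conjE)
  have "\<Inter>F \<subseteq> \<Union>K" using F(5) k(1) by blast
  then show ?case using F(1-4) by (intro exI[of _ F]) simp
next
  case (Basis s)
  then show ?case by (intro exI[of _ "{s}"]) auto
qed


theorem proposition1p1:
  fixes S :: "(complex \<Rightarrow> real) set set" and f :: "(complex \<Rightarrow> real) set \<Rightarrow> real"
  assumes "S \<subseteq> places \<rat>"
    and "f \<in> LCc (Xover S)"
  shows "\<exists>K. number_field K \<and>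
           (\<forall>v\<in>MK K S. \<exists>c. \<forall>y\<in>YKv K v. f y = c) \<and>
           finite {v \<in> MK K S. \<exists>y\<in>YKv K v. f y \<noteq> 0}"
proof -
  note S = assms(1)
  define X where "X = Xover S"
  define T where "T = subtopology Ytop X"
  define Bas where "Bas = {YKv K v | K v. number_field K \<and> v \<in> places K}"
  have Ytop_eq: "Ytop = topology_generated_by Bas" by (simp add: Ytop_def Bas_def)
  define supp where "supp = {x\<in>X. f x \<noteq> 0}"
  define Cl where "Cl = T closure_of supp"
  have loc: "\<forall>x\<in>X. \<exists>U. openin T U \<and> x \<in> U \<and> (\<forall>y\<in>U. f y = f x)"
    using assms(2) unfolding LCc_def T_def X_def by blast
  have comp: "compactin T Cl"
    using assms(2) unfolding LCc_def T_def X_def Cl_def supp_def by blast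
  have cov: "\<And>\<U>. (\<forall>U\<in>\<U>. openin T U) \<Longrightarrow> Cl \<subseteq> \<Union>\<U> \<Longrightarrow> \<exists>\<F>. finite \<F> \<and> \<F> \<subseteq> \<U> \<and> Cl \<subseteq> \<Union>\<F>"
    using comp unfolding compactin_def by blast
  have ClX: "Cl \<subseteq> X" unfolding Cl_def T_def by (rule closure_of_subset_subtopology)
  have Bas_open: "openin Ytop b" if "b \<in> Bas" for b
    unfolding Ytop_eq openin_topology_generated_by_iff
    by (rule generate_topology_on.Basis[OF that])
  have basis_mem: "YKv K v \<in> Bas" if "number_field K" "v \<in> places K" for K v
    unfolding Bas_def using that by blast
  have top_eq: "topspace Ytop = \<Union>Bas" unfolding Ytop_eq by simp
  have supp_Cl: "z \<in> Cl" if "z \<in> X" "f z \<noteq> 0" "z \<in> topspace Ytop" for z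
  proof -
    have "z \<in> topspace T" unfolding T_def topspace_subtopology using that(3,1) by (rule IntI)
    moreover have "z \<in> supp" unfolding supp_def using that(1,2) by (rule CollectI[of _ z, OF conjI])
    ultimately have "z \<in> topspace T \<inter> supp" by (rule IntI)
    thus ?thesis unfolding Cl_def by (rule subsetD[OF closure_of_subset_Int[of T supp]])
  qed
  have "\<forall>x\<in>Cl. \<exists>F. finite F \<and> F \<noteq> {} \<and> F \<subseteq> Bas \<and> x \<in> \<Inter>F \<and> (\<forall>y\<in>\<Inter>F \<inter> X. f y = f x)"
  proof
    fix x assume "x \<in> Cl"
    hence xX: "x \<in> X" using ClX by auto
    obtain U where U: "openin T U" "x \<in> U" "\<forall>y\<in>U. f y = f x" using loc xX by blast
    obtain T0 where T0: "openin Ytop T0" "U = T0 \<inter> X"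
      using U(1) unfolding T_def openin_subtopology by blast
    have g: "generate_topology_on Bas T0" using T0(1) by (simp add: Ytop_eq openin_topology_generated_by_iff)
    have "x \<in> T0" using U(2) T0(2) by auto
    obtain F where F: "finite F" "F \<noteq> {}" "F \<subseteq> Bas" "x \<in> \<Inter>F" "\<Inter>F \<subseteq> T0"
      using gen_basis[OF g \<open>x \<in> T0\<close>] by (elim exE conjE)
    have "\<forall>y\<in>\<Inter>F \<inter> X. f y = f x" using F(5) T0(2) U(3) by auto
    thus "\<exists>F. finite F \<and> F \<noteq> {} \<and> F \<subseteq> Bas \<and> x \<in> \<Inter>F \<and> (\<forall>y\<in>\<Inter>F \<inter> X. f y = f x)"
      using F(1-4) by (intro exI[of _ F]) simp
  qed
  from bchoice[OF this] obtain F where F: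
    "\<forall>x\<in>Cl. finite (F x) \<and> F x \<noteq> {} \<and> F x \<subseteq> Bas \<and> x \<in> \<Inter>(F x) \<and> (\<forall>y\<in>\<Inter>(F x) \<inter> X. f y = f x)"
    by (elim exE)
  define W where "W x = \<Inter>(F x) \<inter> X" for x
  have W_open: "openin T (W x)" if "x \<in> Cl" for x
  proof -
    have Fx: "finite (F x)" "F x \<noteq> {}" "F x \<subseteq> Bas" using F that by auto
    have "generate_topology_on Bas (\<Inter>(F x))"
      using Fx by (intro generate_topology_on_Inter) (auto intro: generate_topology_on.Basis)
    hence "openin Ytop (\<Inter>(F x))" by (simp add: Ytop_eq openin_topology_generated_by_iff)
    thus ?thesis unfolding T_def W_def openin_subtopology by blast
  qed
  have "Cl \<subseteq> \<Union>(W ` Cl)"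
  proof
    fix x assume x: "x \<in> Cl"
    then have "x \<in> W x" using F ClX by (auto simp: W_def)
    then show "x \<in> \<Union>(W ` Cl)" using x by blast
  qed
  then obtain \<G> where G: "finite \<G>" "\<G> \<subseteq> W ` Cl" "Cl \<subseteq> \<Union>\<G>"
    using cov[of "W ` Cl"] W_open by blast
  obtain P where P: "P \<subseteq> Cl" "finite P" "\<G> = W ` P"
    using finite_subset_image[OF G(1,2)] by blast
  have PW: "Cl \<subseteq> \<Union>(W ` P)" using G(3) P(3) by simp
  define BB where "BB = \<Union>(F ` P)"
  have BBfin: "finite BB" unfolding BB_def using P F by auto
  have BBsub: "BB \<subseteq> Bas" unfolding BB_def using P F by auto
  have "\<forall>b\<in>BB. \<exists>kv. number_field (fst kv) \<and> snd kv \<in> places (fst kv) \<and> b = YKv (fst kv) (snd kv)"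
  proof
    fix b assume "b \<in> BB"
    then have "b \<in> Bas" using BBsub by auto
    then obtain K v where "number_field K" "v \<in> places K" "b = YKv K v" unfolding Bas_def by blast
    then show "\<exists>kv. number_field (fst kv) \<and> snd kv \<in> places (fst kv) \<and> b = YKv (fst kv) (snd kv)"
      by (intro exI[of _ "(K, v)"]) simp
  qed
  from bchoice[OF this] obtain kv where kv:
    "\<forall>b\<in>BB. number_field (fst (kv b)) \<and> snd (kv b) \<in> places (fst (kv b)) \<and> b = YKv (fst (kv b)) (snd (kv b))"
    by (elim exE)
  have "finite ((\<lambda>b. fst (kv b)) ` BB)" using BBfin by simp
  moreover have "\<forall>K\<in>(\<lambda>b. fst (kv b)) ` BB. number_field K" using kv by auto
  ultimately obtain K where K: "number_field K" "\<forall>K'\<in>(\<lambda>b. fst (kv b)) ` BB. K' \<subseteq> K"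
    using common_field by blast
  have refine: "YKv K v \<subseteq> \<Inter>(F x)" if x: "x \<in> P" and v: "v \<in> places K"
    and z0: "z0 \<in> YKv K v" "z0 \<in> \<Inter>(F x)" for x v z0
  proof
    fix y assume y: "y \<in> YKv K v"
    show "y \<in> \<Inter>(F x)"
    proof
      fix b assume b: "b \<in> F x"
      then have bBB: "b \<in> BB" using x by (auto simp: BB_def)
      have k: "number_field (fst (kv b))" "snd (kv b) \<in> places (fst (kv b))" "b = YKv (fst (kv b)) (snd (kv b))"
        using kv bBB by auto
      have sub: "fst (kv b) \<subseteq> K" using K(2) bBB by auto
      have "z0 \<in> YKv (fst (kv b)) (snd (kv b))" using z0(2) b k(3) by auto
      then have "YKv K v \<subseteq> YKv (fst (kv b)) (snd (kv b))"
        using YKv_mono[OF k(1) K(1) sub v k(2) z0(1)] by blast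
      then show "y \<in> b" using y k(3) by auto
    qed
  qed
  have A: "\<forall>v\<in>MK K S. \<exists>c. \<forall>y\<in>YKv K v. f y = c"
  proof
    fix v assume v: "v \<in> MK K S"
    have vK: "v \<in> places K" using v unfolding MK_def by blast
    have vX: "YKv K v \<subseteq> X" using YKv_sub_X[OF K(1) v S] unfolding X_def .
    show "\<exists>c. \<forall>y\<in>YKv K v. f y = c"
    proof (cases "\<exists>z0\<in>YKv K v. f z0 \<noteq> 0")
      case False then show ?thesis by (intro exI[of _ 0]) auto
    next
      case True
      then obtain z0 where z0: "z0 \<in> YKv K v" "f z0 \<noteq> 0" by blast
      have z0X: "z0 \<in> X" using vX z0 by auto
      have z0top: "z0 \<in> topspace Ytop" using z0(1) basis_mem[OF K(1) vK] top_eq by auto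
      have "z0 \<in> Cl" using supp_Cl[OF z0X z0(2) z0top] .
      then obtain x where x: "x \<in> P" "z0 \<in> W x" using PW by auto
      have sub: "YKv K v \<subseteq> \<Inter>(F x)" using refine[OF x(1) vK z0(1)] x(2) by (auto simp: W_def)
      have Fx: "\<forall>y\<in>\<Inter>(F x) \<inter> X. f y = f x" using F x(1) P(1) by auto
      show ?thesis
      proof (intro exI[of _ "f x"] ballI)
        fix y assume y: "y \<in> YKv K v"
        then have "y \<in> \<Inter>(F x) \<inter> X" using sub vX by auto
        then show "f y = f x" using Fx by blast
      qed
    qed
  qed
  define V where "V v = YKv K v \<inter> X" for v
  have V_open: "\<forall>U\<in>V ` MK K S. openin T U"
  proof
    fix U assume "U \<in> V ` MK K S"
    then obtain v where v: "v \<in> MK K S" "U = V v" by blast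
    have "v \<in> places K" using v(1) unfolding MK_def by blast
    then have "openin Ytop (YKv K v)" using Bas_open basis_mem K(1) by blast
    then show "openin T U" unfolding v(2) V_def T_def openin_subtopology by blast
  qed
  have "Cl \<subseteq> \<Union>(V ` MK K S)"
  proof
    fix x assume "x \<in> Cl"
    then have "x \<in> X" using ClX by auto
    then obtain v where "v \<in> MK K S" "x \<in> YKv K v" using exists_place[OF K(1) S] X_def by blast
    then show "x \<in> \<Union>(V ` MK K S)" using \<open>x \<in> X\<close> by (auto simp: V_def)
  qed
  then obtain \<G>' where G': "finite \<G>'" "\<G>' \<subseteq> V ` MK K S" "Cl \<subseteq> \<Union>\<G>'"
    using cov[of "V ` MK K S"] V_open by blast
  obtain Gs where Gs: "Gs \<subseteq> MK K S" "finite Gs" "\<G>' = V ` Gs"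
    using finite_subset_image[OF G'(1,2)] by blast
  have B: "finite {v \<in> MK K S. \<exists>y\<in>YKv K v. f y \<noteq> 0}"
  proof (rule finite_subset[OF _ Gs(2)])
    show "{v \<in> MK K S. \<exists>y\<in>YKv K v. f y \<noteq> 0} \<subseteq> Gs"
    proof
      fix v assume "v \<in> {v \<in> MK K S. \<exists>y\<in>YKv K v. f y \<noteq> 0}"
      then obtain y where v: "v \<in> MK K S" and y: "y \<in> YKv K v" "f y \<noteq> 0" by blast
      have vK: "v \<in> places K" using v unfolding MK_def by blast
      have yX: "y \<in> X" using YKv_sub_X[OF K(1) v S] y(1) unfolding X_def by blast
      have ytop: "y \<in> topspace Ytop" using y(1) basis_mem[OF K(1) vK] top_eq by auto
      have "y \<in> Cl" using supp_Cl[OF yX y(2) ytop] .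
      then obtain v' where v': "v' \<in> Gs" "y \<in> V v'" using G'(3) Gs(3) by auto
      have v'K: "v' \<in> places K" using v'(1) Gs(1) unfolding MK_def by blast
      have "v = v'" using YKv_disj[OF K(1) vK v'K y(1)] v'(2) by (auto simp: V_def)
      then show "v \<in> Gs" using v'(1) by simp
    qed
  qed
  show ?thesis using K(1) A B by blast
qed

end
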